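(* Let $a,b>-1$, $n\ge2$, and $\lambda$ a partition with $\ell(\lambda)\le n$. In the expansion $$\mathfrak P_\lambda(x_1,\dots,x_{n-1},1;a,b)=\sum_{\nu:\ \ell(\nu)\le n-1}c_{\lambda\nu}\,\mathfrak P_\nu(x_1,\dots,x_{n-1};a,b)$$ all coefficients $c_{\lambda\nu}$ are nonnegative.
   Context: $\mathfrak p_l(x;a,b)$ ($l\ge0$) are the classical Jacobi polynomials orthogonal on $[-1,1]$ with weight $(1-x)^a(1+x)^b$, normalized by $\mathfrak p_l(x;a,b)=\frac{\Gamma(l+a+1)}{\Gamma(l+1)\Gamma(a+1)}{}_2F_1(-l,l+a+b+1;a+1;\frac{1-x}2)$. For $m\ge1$ and a partition $\nu$ with $\ell(\nu)\le m$, $\mathfrak P_\nu(x_1,\dots,x_m;a,b)=\det_{1\le i,j\le m}[\mathfrak p_{\nu_i+m-i}(x_j;a,b)]/\prod_{1\le i<j\le m}(x_i-x_j)$. These form a basis of symmetric polynomials in $x_1,\dots,x_m$, so the expansion exists and is unique. *)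

theory Defs
  imports "HOL-Analysis.Analysis"
begin

text \<open>One-variable Jacobi polynomial p_l(x;a,b), normalized as
  Gamma(l+a+1)/(Gamma(l+1) Gamma(a+1)) * 2F1(-l, l+a+b+1; a+1; (1-x)/2);
  the terminating hypergeometric series is written out as a finite sum.\<close>
definition jacobi :: "nat \<Rightarrow> real \<Rightarrow> real \<Rightarrow> real \<Rightarrow> real" where
  "jacobi l a b x =
     Gamma (real l + a + 1) / (Gamma (real l + 1) * Gamma (a + 1)) *
     (\<Sum>k\<le>l. pochhammer (- real l) k * pochhammer (real l + a + b + 1) k
              / (pochhammer (a + 1) k * fact k) * ((1 - x) / 2) ^ k)"

definition is_partition_len :: "nat \<Rightarrow> (nat \<Rightarrow> nat) \<Rightarrow> bool" where
  "is_partition_len m \<nu> \<longleftrightarrow>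
     (\<forall>i j. i \<le> j \<longrightarrow> \<nu> j \<le> \<nu> i) \<and> (\<forall>i\<ge>m. \<nu> i = 0)"

definition detm :: "nat \<Rightarrow> (nat \<Rightarrow> nat \<Rightarrow> real) \<Rightarrow> real" where
  "detm m A = (\<Sum>p | p permutes {..<m}. of_int (sign p) * (\<Prod>i<m. A i (p i)))"

definition vandermonde :: "nat \<Rightarrow> (nat \<Rightarrow> real) \<Rightarrow> real" where
  "vandermonde m x = (\<Prod>i<m. \<Prod>j\<in>{i<..<m}. (x i - x j))"

text \<open>Multivariate Jacobi polynomial P_nu(x_1..x_m;a,b) evaluated at x 0, ..., x (m-1)
  (meaningful as the polynomial when the x i are pairwise distinct).\<close>
definition mjacobi :: "nat \<Rightarrow> (nat \<Rightarrow> nat) \<Rightarrow> real \<Rightarrow> real \<Rightarrow> (nat \<Rightarrow> real) \<Rightarrow> real" where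
  "mjacobi m \<nu> a b x =
     detm m (\<lambda>i j. jacobi (\<nu> i + m - 1 - i) a b (x j)) / vandermonde m x"

end

theory Submission
  imports Defs "Jordan_Normal_Form.Determinant"
begin


definition G :: "nat \<Rightarrow> real \<Rightarrow> real" where
  "G l a = Gamma (real l + a + 1) / (Gamma (real l + 1) * Gamma (a + 1))"

definition co :: "nat \<Rightarrow> real \<Rightarrow> real \<Rightarrow> nat \<Rightarrow> real" where
  "co l a b k = G l a * (pochhammer (- real l) k * pochhammer (real l + a + b + 1) k
              / (pochhammer (a + 1) k * fact k))"

lemma jacobi_co: "jacobi l a b x = (\<Sum>k\<le>l. co l a b k * ((1 - x) / 2) ^ k)"
  unfolding jacobi_def co_def G_def by (simp add: sum_distrib_left mult.assoc)

lemma co_zero: "k > l \<Longrightarrow> co l a b k = 0"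
  unfolding co_def using pochhammer_of_nat_eq_0_iff[of l k, where 'a=real] by simp

lemma jacobi_co_ext: "l \<le> M \<Longrightarrow> jacobi l a b x = (\<Sum>k\<le>M. co l a b k * ((1 - x) / 2) ^ k)"
  unfolding jacobi_co by (rule sum.mono_neutral_left) (auto simp: co_zero)

lemma Gamma_succ: "z > 0 \<Longrightarrow> Gamma (z + 1) = z * Gamma (z::real)"
  by (rule Gamma_plus1) (auto elim!: nonpos_Ints_cases)

lemma G_pos: "a > -1 \<Longrightarrow> G l a > 0"
  unfolding G_def by (auto intro!: divide_pos_pos mult_pos_pos)

lemma G_Suc: "a > -1 \<Longrightarrow> G (Suc l) a = G l a * (real l + a + 1) / (real l + 1)"
  unfolding G_def using Gamma_succ[of "real l + a + 1"] Gamma_succ[of "real l + 1"]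
  by (simp add: field_simps add_ac)

lemma G_a1: "a > -1 \<Longrightarrow> G l (a + 1) = G l a * (real l + a + 1) / (a + 1)"
  unfolding G_def using Gamma_succ[of "real l + a + 1"] Gamma_succ[of "a + 1"]
  by (simp add: field_simps add_ac)

lemma poch_shift: "pochhammer (z + 1) k * z = pochhammer z k * (z + real k)"
  using pochhammer_rec[of z k] pochhammer_rec'[of z k] by (simp add: mult_ac)

lemma jacobi_at1: "a > -1 \<Longrightarrow> jacobi l a b 1 = G l a"
proof -
  have "jacobi l a b 1 = (\<Sum>k\<le>l. co l a b k * 0 ^ k)" by (simp add: jacobi_co)
  also have "\<dots> = co l a b 0" by (simp add: power_0_left sum.atMost_shift del: sum.atMost_Suc)
  finally show ?thesis by (simp add: co_def)
qed



lemma co_C1: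
  assumes a: "a > -1" and b: "b > -1"
  shows "real (Suc N) * co (Suc N) a b k - (real N + a + 1) * co N a b k =
         - (2 * real N + a + b + 2) * (case k of 0 \<Rightarrow> 0 | Suc j \<Rightarrow> co N (a + 1) b j)"
proof (cases k)
  case 0
  then show ?thesis using G_Suc[OF a, of N] a by (simp add: co_def field_simps)
next
  case (Suc j)
  have e1: "pochhammer (- real (Suc N)) (Suc j) = - (real N + 1) * pochhammer (- real N) j"
    using pochhammer_rec[of "- real (Suc N)" j] by (simp add: add_ac)
  have e2: "pochhammer (- real N) (Suc j) = (real j - real N) * pochhammer (- real N) j"
    using pochhammer_rec'[of "- real N" j] by simp
  have e3: "pochhammer (real (Suc N) + a + b + 1) (Suc j) = (real N + a + b + 2 + real j) * pochhammer (real N + a + b + 2) j"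
    using pochhammer_rec'[of "real (Suc N) + a + b + 1" j] by (simp add: add_ac)
  have e4: "pochhammer (real N + a + b + 1) (Suc j) = (real N + a + b + 1) * pochhammer (real N + a + b + 2) j"
    using pochhammer_rec[of "real N + a + b + 1" j] by (simp add: add_ac)
  have e5: "pochhammer (real N + (a + 1) + b + 1) j = pochhammer (real N + a + b + 2) j"
    by (simp add: add_ac)
  have e6: "pochhammer (a + 1) (Suc j) = (a + 1) * pochhammer (a + 2) j"
    using pochhammer_rec[of "a + 1" j] by (simp add: add_ac)
  have e7: "pochhammer (a + 1 + 1) j = pochhammer (a + 2) j" by (simp add: add_ac)
  have nz1: "pochhammer (a + 2) j \<noteq> 0" using a by (intro pochhammer_pos[THEN less_imp_neq, symmetric]) simp
  have g1: "G (Suc N) a = G N a * (real N + a + 1) / (real N + 1)" using G_Suc[OF a] .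
  have g2: "G N (a + 1) = G N a * (real N + a + 1) / (a + 1)" using G_a1[OF a] .
  have nz2: "fact j \<noteq> (0::real)" by simp
  have key: "\<And>g p q r f. r \<noteq> 0 \<Longrightarrow> f \<noteq> 0 \<Longrightarrow>
     real (Suc N) * (g * (real N + a + 1) / (real N + 1) *
      (- (real N + 1) * p * ((real N + a + b + 2 + real j) * q) /
       ((a + 1) * r * (real (Suc j) * f)))) -
     (real N + a + 1) * (g * ((real j - real N) * p * ((real N + a + b + 1) * q) /
       ((a + 1) * r * (real (Suc j) * f)))) =
     - (2 * real N + a + b + 2) * (g * (real N + a + 1) / (a + 1) * (p * q / (r * f)))"
  proof -
    fix g p q r f :: real assume "r \<noteq> 0" "f \<noteq> 0"
    moreover have "a + 1 \<noteq> 0" "1 + a \<noteq> 0" "real N + 1 \<noteq> 0" "1 + real j \<noteq> 0" using a by linarith+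
    ultimately show "?thesis g p q r f" by (simp add: divide_simps) (simp add: algebra_simps)
  qed
  show ?thesis unfolding Suc nat.case co_def e1 e2 e3 e4 e5 e6 e7 g1 g2 fact_Suc
    by (rule key[OF nz1 nz2])
qed

lemma co_C2:
  assumes a: "a > -1" and b: "b > -1"
  shows "(real (Suc m) + a + b + 1) * co (Suc m) (a + 1) b k =
         (2 * real (Suc m) + a + b + 1) * co (Suc m) a b k + (real (Suc m) + b) * co m (a + 1) b k"
proof -
  have z0: "real (Suc m) + a + b + 1 \<noteq> 0" using a b by simp
  have r1: "pochhammer (- real m) k = pochhammer (- real (Suc m)) k * (real k - real (Suc m)) / (- real (Suc m))"
  proof -
    have h: "- real (Suc m) + 1 = - real m" by simp
    show ?thesis using poch_shift[of "- real (Suc m)" k, unfolded h]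
      by (simp add: field_simps del: of_nat_Suc)
  qed
  have r2: "pochhammer (real (Suc m) + (a + 1) + b + 1) k = pochhammer (real (Suc m) + a + b + 1) k * (real (Suc m) + a + b + 1 + real k) / (real (Suc m) + a + b + 1)"
    using poch_shift[of "real (Suc m) + a + b + 1" k] z0 by (simp add: field_simps add_ac del: of_nat_Suc)
  have r3: "pochhammer (real m + (a + 1) + b + 1) k = pochhammer (real (Suc m) + a + b + 1) k"
    by (simp add: add_ac)
  have r4: "pochhammer (a + 1 + 1) k = pochhammer (a + 1) k * (a + 1 + real k) / (a + 1)"
    using poch_shift[of "a + 1" k] a by (simp add: field_simps add_ac)
  have g1: "G (Suc m) (a + 1) = G (Suc m) a * (real (Suc m) + a + 1) / (a + 1)" using G_a1[OF a] .
  have g2: "G m (a + 1) = G (Suc m) a * (real m + 1) / (a + 1)"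
  proof -
    have "G (Suc m) (a + 1) = G m (a + 1) * (real m + (a + 1) + 1) / (real m + 1)"
      using G_Suc[of "a + 1" m] a by simp
    then have e1: "(real m + 1) * G (Suc m) (a + 1) = (real m + a + 2) * G m (a + 1)"
      using a by (simp add: field_simps)
    have e2: "(a + 1) * G (Suc m) (a + 1) = (real m + a + 2) * G (Suc m) a"
      using g1 a by (simp add: field_simps)
    have "(real m + a + 2) * ((a + 1) * G m (a + 1)) = (real m + a + 2) * ((real m + 1) * G (Suc m) a)"
      using e1 e2 by (metis mult.left_commute)
    then have "(a + 1) * G m (a + 1) = (real m + 1) * G (Suc m) a" using a by simp
    then show ?thesis using a by (simp add: field_simps)
  qed
  have key: "\<And>g p q r f M K. r \<noteq> 0 \<Longrightarrow> f \<noteq> 0 \<Longrightarrow> M > 0 \<Longrightarrow> K \<ge> 0 \<Longrightarrow> M + a + b + 1 \<noteq> 0 \<Longrightarrow>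
    (M + a + b + 1) * (g * (M + a + 1) / (a + 1) * (p * (q * (M + a + b + 1 + K) / (M + a + b + 1)) /
       (r * (a + 1 + K) / (a + 1) * f))) =
    (2 * M + a + b + 1) * (g * (p * q / (r * f))) +
    (M + b) * (g * M / (a + 1) * (p * (K - M) / - M * q / (r * (a + 1 + K) / (a + 1) * f)))"
  proof -
    fix g p q r f M K :: real assume "r \<noteq> 0" "f \<noteq> 0" "M > 0" "K \<ge> 0" "M + a + b + 1 \<noteq> 0"
    moreover have "a + 1 \<noteq> 0" "a + 1 + K \<noteq> 0" using a \<open>K \<ge> 0\<close> by linarith+
    ultimately show "?thesis g p q r f M K" by (simp add: divide_simps) (simp add: algebra_simps)
  qed
  have nzr: "pochhammer (a + 1) k \<noteq> 0" using a by (intro pochhammer_pos[THEN less_imp_neq, symmetric]) simp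
  have hm: "real m + 1 = real (Suc m)" by simp
  show ?thesis unfolding co_def r1 r2 r3 r4 g1 g2 hm
    by (rule key[OF nzr _ _ _ z0]) auto
qed

lemma J1:
  assumes a: "a > -1" and b: "b > -1"
  shows "real (Suc N) * jacobi (Suc N) a b x - (real N + a + 1) * jacobi N a b x =
         (2 * real N + a + b + 2) / 2 * (x - 1) * jacobi N (a + 1) b x"
proof -
  define t where "t = (1 - x) / 2"
  have "real (Suc N) * jacobi (Suc N) a b x - (real N + a + 1) * jacobi N a b x =
     (\<Sum>k\<le>Suc N. (real (Suc N) * co (Suc N) a b k - (real N + a + 1) * co N a b k) * t ^ k)"
    unfolding jacobi_co_ext[of N "Suc N" a b x, OF le_SucI[OF order_refl]]
    unfolding jacobi_co t_def
    by (simp add: sum_distrib_left sum_subtractf algebra_simps del: sum.atMost_Suc)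
  also have "\<dots> = (\<Sum>k\<le>Suc N. - (2 * real N + a + b + 2) * (case k of 0 \<Rightarrow> 0 | Suc j \<Rightarrow> co N (a + 1) b j) * t ^ k)"
    using co_C1[OF a b] by simp
  also have "\<dots> = (\<Sum>j\<le>N. - (2 * real N + a + b + 2) * co N (a + 1) b j * t ^ Suc j)"
    by (subst sum.atMost_Suc_shift) simp
  also have "\<dots> = (2 * real N + a + b + 2) * (- t) * (\<Sum>j\<le>N. co N (a + 1) b j * t ^ j)"
    unfolding sum_distrib_left by (intro sum.cong refl) (simp add: algebra_simps)
  also have "\<dots> = (2 * real N + a + b + 2) / 2 * (x - 1) * (\<Sum>j\<le>N. co N (a + 1) b j * t ^ j)"
    by (simp add: t_def field_simps)
  also have "\<dots> = (2 * real N + a + b + 2) / 2 * (x - 1) * jacobi N (a + 1) b x"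
    unfolding jacobi_co t_def ..
  finally show ?thesis .
qed

lemma J2:
  assumes a: "a > -1" and b: "b > -1"
  shows "(real (Suc m) + a + b + 1) * jacobi (Suc m) (a + 1) b x =
         (2 * real (Suc m) + a + b + 1) * jacobi (Suc m) a b x + (real (Suc m) + b) * jacobi m (a + 1) b x"
  unfolding jacobi_co_ext[of m "Suc m" "a + 1" b x, OF le_SucI[OF order_refl]]
  unfolding jacobi_co
  unfolding sum_distrib_left sum.distrib[symmetric]
proof (intro sum.cong refl)
  fix k
  show "(real (Suc m) + a + b + 1) * (co (Suc m) (a + 1) b k * ((1 - x) / 2) ^ k) =
    (2 * real (Suc m) + a + b + 1) * (co (Suc m) a b k * ((1 - x) / 2) ^ k) +
    (real (Suc m) + b) * (co m (a + 1) b k * ((1 - x) / 2) ^ k)"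
    using arg_cong[OF co_C2[OF a b, of m k], of "\<lambda>z. z * ((1 - x) / 2) ^ k"]
    by (simp only: algebra_simps)
qed



definition piq :: "real \<Rightarrow> real \<Rightarrow> nat \<Rightarrow> real" where
  "piq a b n = (\<Prod>j\<in>{1..n}. (real j + b) / (real j + a + b + 1))"

definition wq :: "real \<Rightarrow> real \<Rightarrow> nat \<Rightarrow> real" where
  "wq a b k = (if k = 0 then 1 else (2 * real k + a + b + 1) / ((real k + a + b + 1) * piq a b k))"

lemma piq_pos: "a > -1 \<Longrightarrow> b > -1 \<Longrightarrow> piq a b n > 0"
  unfolding piq_def by (intro prod_pos) (auto intro!: divide_pos_pos)

lemma piq_Suc: "piq a b (Suc n) = piq a b n * (real (Suc n) + b) / (real (Suc n) + a + b + 1)"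
  unfolding piq_def by (simp add: prod.nat_ivl_Suc')

lemma wq_pos: "a > -1 \<Longrightarrow> b > -1 \<Longrightarrow> wq a b k > 0"
  unfolding wq_def using piq_pos[of a b k] by (auto intro!: divide_pos_pos mult_pos_pos)

lemma G0: assumes "a > -1" shows "G 0 a = 1"
proof -
  have "Gamma (a + 1) > 0" using assms by (intro Gamma_real_pos) simp
  then show ?thesis unfolding G_def by simp
qed

lemma jacobi0: "a > -1 \<Longrightarrow> jacobi 0 a b x = 1"
  unfolding jacobi_co co_def using G0 by simp

lemma Qexp:
  assumes a: "a > -1" and b: "b > -1"
  shows "jacobi n (a + 1) b x = piq a b n * (\<Sum>k\<le>n. wq a b k * jacobi k a b x)"
proof (induction n)
  case 0
  then show ?case using jacobi0[of a] jacobi0[of "a+1"] a by (simp add: piq_def wq_def)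
next
  case (Suc m)
  have s0: "real (Suc m) + a + b + 1 > 0" using a b by simp
  have "(real (Suc m) + a + b + 1) * jacobi (Suc m) (a + 1) b x =
         (2 * real (Suc m) + a + b + 1) * jacobi (Suc m) a b x + (real (Suc m) + b) * jacobi m (a + 1) b x"
    by (rule J2[OF a b])
  then have "jacobi (Suc m) (a + 1) b x =
     ((2 * real (Suc m) + a + b + 1) * jacobi (Suc m) a b x + (real (Suc m) + b) * jacobi m (a + 1) b x)
      / (real (Suc m) + a + b + 1)"
    using s0 by (simp add: field_simps)
  also have "\<dots> = piq a b (Suc m) * wq a b (Suc m) * jacobi (Suc m) a b x +
       piq a b (Suc m) * (\<Sum>k\<le>m. wq a b k * jacobi k a b x)"
    unfolding Suc piq_Suc wq_def using s0 piq_pos[OF a b, of m] b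
    by (simp add: divide_simps del: of_nat_Suc)
  also have "\<dots> = piq a b (Suc m) * (\<Sum>k\<le>Suc m. wq a b k * jacobi k a b x)"
    by (simp add: algebra_simps)
  finally show ?case .
qed

definition theta :: "real \<Rightarrow> real \<Rightarrow> nat \<Rightarrow> real" where
  "theta a b N = (2 * real N + a + b + 2) * piq a b N / (2 * (real N + a + 1) * G N a)"

lemma theta_pos: "a > -1 \<Longrightarrow> b > -1 \<Longrightarrow> theta a b N > 0"
  unfolding theta_def using piq_pos[of a b N] G_pos[of a N]
  by (auto intro!: divide_pos_pos mult_pos_pos)

lemma Dstep:
  assumes a: "a > -1" and b: "b > -1"
  shows "jacobi (Suc N) a b x / G (Suc N) a - jacobi N a b x / G N a =
     (x - 1) * theta a b N * (\<Sum>k\<le>N. wq a b k * jacobi k a b x)"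
proof -
  have g: "G N a > 0" using G_pos[OF a] .
  have n1: "real N + a + 1 > 0" using a by simp
  have "jacobi (Suc N) a b x / G (Suc N) a - jacobi N a b x / G N a =
    (real (Suc N) * jacobi (Suc N) a b x - (real N + a + 1) * jacobi N a b x) / ((real N + a + 1) * G N a)"
    unfolding G_Suc[OF a] using g n1 by (simp add: divide_simps)
  also have "\<dots> = (2 * real N + a + b + 2) / 2 * (x - 1) * jacobi N (a + 1) b x / ((real N + a + 1) * G N a)"
    unfolding J1[OF a b] ..
  also have "\<dots> = (x - 1) * theta a b N * (\<Sum>k\<le>N. wq a b k * jacobi k a b x)"
    unfolding Qexp[OF a b] theta_def using g n1 by (simp add: field_simps)
  finally show ?thesis .
qed



lemma detm_jnf: "detm m A = Determinant.det (Matrix.mat m m (\<lambda>(i,j). A i j))"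
proof -
  have "Determinant.det (Matrix.mat m m (\<lambda>(i,j). A i j)) =
     (\<Sum>p \<in> {p. p permutes {0..<m}}. of_int (sign p) * (\<Prod>i = 0..<m. Matrix.mat m m (\<lambda>(i,j). A i j) $$ (i, p i)))"
    by (rule det_def') simp
  also have "\<dots> = (\<Sum>p \<in> {p. p permutes {..<m}}. of_int (sign p) * (\<Prod>i<m. A i (p i)))"
    unfolding atLeast0LessThan
  proof (intro sum.cong refl arg_cong2[where f="(*)"] prod.cong)
    fix p i assume "p \<in> {p. p permutes {..<m}}" "i \<in> {..<m}"
    then have "p i < m" by (auto dest: permutes_in_image)
    then show "Matrix.mat m m (\<lambda>(i,j). A i j) $$ (i, p i) = A i (p i)" using \<open>i \<in> {..<m}\<close> by simp
  qed
  finally show ?thesis unfolding detm_def by simp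
qed

lemma detm_multilinear:
  assumes fin: "\<And>i. finite (S i)"
  shows "detm m (\<lambda>i j. \<Sum>k\<in>S i. c i k * F k j) =
    (\<Sum>\<kappa>\<in>PiE {..<m} S. (\<Prod>i<m. c i (\<kappa> i)) * detm m (\<lambda>i j. F (\<kappa> i) j))"
proof -
  have "detm m (\<lambda>i j. \<Sum>k\<in>S i. c i k * F k j) =
     (\<Sum>p | p permutes {..<m}. of_int (sign p) *
        (\<Sum>\<kappa>\<in>PiE {..<m} S. \<Prod>i<m. c i (\<kappa> i) * F (\<kappa> i) (p i)))"
    unfolding detm_def by (simp add: prod_sum_PiE fin)
  also have "\<dots> = (\<Sum>p | p permutes {..<m}. \<Sum>\<kappa>\<in>PiE {..<m} S.
        (\<Prod>i<m. c i (\<kappa> i)) * (of_int (sign p) * (\<Prod>i<m. F (\<kappa> i) (p i))))"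
    by (simp add: sum_distrib_left prod.distrib mult_ac)
  also have "\<dots> = (\<Sum>\<kappa>\<in>PiE {..<m} S. \<Sum>p | p permutes {..<m}.
        (\<Prod>i<m. c i (\<kappa> i)) * (of_int (sign p) * (\<Prod>i<m. F (\<kappa> i) (p i))))"
    by (rule sum.swap)
  also have "\<dots> = (\<Sum>\<kappa>\<in>PiE {..<m} S. (\<Prod>i<m. c i (\<kappa> i)) * detm m (\<lambda>i j. F (\<kappa> i) j))"
    unfolding detm_def by (simp add: sum_distrib_left)
  finally show ?thesis .
qed

lemma detm_colscale:
  "detm m (\<lambda>i j. A i j * d j) = (\<Prod>j<m. d j) * detm m A"
proof -
  have "(\<Prod>i<m. A i (p i) * d (p i)) = (\<Prod>j<m. d j) * (\<Prod>i<m. A i (p i))"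
    if "p permutes {..<m}" for p
  proof -
    have "(\<Prod>i<m. d (p i)) = (\<Prod>j<m. d j)"
      using prod.permute[OF that, of d] by (simp add: comp_def)
    then show ?thesis by (simp add: prod.distrib mult_ac)
  qed
  then show ?thesis unfolding detm_def by (simp add: sum_distrib_left mult_ac)
qed

lemma detm_rowscale:
  "detm m (\<lambda>i j. e i * A i j) = (\<Prod>i<m. e i) * detm m A"
  unfolding detm_def by (simp add: prod.distrib sum_distrib_left mult_ac)

lemma detm_rowop:
  "detm m (\<lambda>i j. if Suc i < m then A i j - r i * A (Suc i) j else A i j) = detm m A"
proof -
  define U :: "real Matrix.mat" where "U = Matrix.mat m m (\<lambda>(i,j). if i = j then 1 else if j = Suc i then - r i else 0)"
  define MA :: "real Matrix.mat" where "MA = Matrix.mat m m (\<lambda>(i,j). A i j)"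
  have U: "U \<in> carrier_mat m m" and MA: "MA \<in> carrier_mat m m" unfolding U_def MA_def by auto
  have eq: "Matrix.mat m m (\<lambda>(i,j). if Suc i < m then A i j - r i * A (Suc i) j else A i j) = U * MA"
  proof (rule eq_matI)
    fix i j assume ij: "i < dim_row (U * MA)" "j < dim_col (U * MA)"
    then have i: "i < m" and j: "j < m" using U MA by auto
    have "(U * MA) $$ (i, j) = (\<Sum>k \<in> {0..<m}. U $$ (i,k) * MA $$ (k,j))"
      using i j U MA by (simp add: scalar_prod_def)
    also have "\<dots> = (\<Sum>k \<in> {0..<m}. (if k = i then A i j else 0) +
         (if k = Suc i then - r i * A (Suc i) j else 0))"
      by (intro sum.cong refl) (auto simp: U_def MA_def i j)
    also have "\<dots> = (if Suc i < m then A i j - r i * A (Suc i) j else A i j)"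
      using i by (simp add: sum.distrib)
    finally show "Matrix.mat m m (\<lambda>(i,j). if Suc i < m then A i j - r i * A (Suc i) j else A i j) $$ (i, j) = (U * MA) $$ (i, j)"
      using i j by simp
  qed (use U MA in auto)
  have ut: "upper_triangular U" unfolding upper_triangular_def U_def by auto
  have dU: "Determinant.det U = 1"
    using det_upper_triangular[OF ut U] unfolding prod_list_diag_prod using U by (simp add: U_def)
  have "Determinant.det (U * MA) = Determinant.det MA" using det_mult[OF U MA] dU by simp
  then show ?thesis unfolding detm_jnf eq MA_def by simp
qed

lemma detm_lastcol:
  assumes "\<And>i. i < m \<Longrightarrow> A i m = 0"
  shows "detm (Suc m) A = A m m * detm m A"
proof -
  define MA :: "real Matrix.mat" where "MA = Matrix.mat (Suc m) (Suc m) (\<lambda>(i,j). A i j)"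
  have MA: "MA \<in> carrier_mat (Suc m) (Suc m)" unfolding MA_def by auto
  have "Determinant.det MA = (\<Sum>i<Suc m. MA $$ (i,m) * cofactor MA i m)"
    by (rule laplace_expansion_column[OF MA]) simp
  also have "\<dots> = MA $$ (m,m) * cofactor MA m m"
    using assms by (simp add: MA_def)
  also have "mat_delete MA m m = Matrix.mat m m (\<lambda>(i,j). A i j)"
    by (rule eq_matI) (auto simp: mat_delete_def MA_def)
  then have "cofactor MA m m = detm m A"
    unfolding cofactor_def detm_jnf by simp
  finally show ?thesis unfolding detm_jnf[of "Suc m"] MA_def[symmetric] by (simp add: MA_def)
qed



lemma vander_split:
  "vandermonde (Suc m) (x(m := 1)) = vandermonde m x * (\<Prod>i<m. x i - 1)"
proof -
  have "vandermonde (Suc m) (x(m := 1)) =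
     (\<Prod>i<m. \<Prod>j\<in>{i<..<Suc m}. (x(m := 1)) i - (x(m := 1)) j)"
    unfolding vandermonde_def by simp
  also have "\<dots> = (\<Prod>i<m. (x i - 1) * (\<Prod>j\<in>{i<..<m}. x i - x j))"
  proof (intro prod.cong refl)
    fix i assume i: "i \<in> {..<m}"
    have e: "{i<..<Suc m} = insert m {i<..<m}" using i by auto
    have "(\<Prod>j\<in>{i<..<m}. (x(m := 1)) i - (x(m := 1)) j) = (\<Prod>j\<in>{i<..<m}. x i - x j)"
      using i by (intro prod.cong refl) auto
    then show "(\<Prod>j\<in>{i<..<Suc m}. (x(m := 1)) i - (x(m := 1)) j) = (x i - 1) * (\<Prod>j\<in>{i<..<m}. x i - x j)"
      unfolding e using i by simp
  qed
  also have "\<dots> = vandermonde m x * (\<Prod>i<m. x i - 1)"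
    unfolding vandermonde_def by (simp add: prod.distrib mult_ac)
  finally show ?thesis .
qed

lemma detm_cong:
  assumes "\<And>i j. i < m \<Longrightarrow> j < m \<Longrightarrow> A i j = B i j"
  shows "detm m A = detm m B"
  unfolding detm_def
proof (intro sum.cong refl arg_cong2[where f="(*)"] prod.cong)
  fix p i assume "p \<in> {p. p permutes {..<m}}" "i \<in> {..<m}"
  then show "A i (p i) = B i (p i)" using assms by (auto dest: permutes_in_image)
qed

lemma decr_gap:
  assumes "\<And>i. Suc i < m \<Longrightarrow> f (Suc i) < (f i :: nat)" "i \<le> j" "j < m"
  shows "f j + (j - i) \<le> f i"
  using assms(2,3)
proof (induction j)
  case 0 then show ?case by simp
next
  case (Suc j)
  show ?case
  proof (cases "i = Suc j")
    case True then show ?thesis by simp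
  next
    case False
    then have "i \<le> j" using Suc by simp
    then have "f j + (j - i) \<le> f i" using Suc by simp
    moreover have "f (Suc j) < f j" using assms(1) Suc by simp
    ultimately show ?thesis using \<open>i \<le> j\<close> by linarith
  qed
qed

definition QQ :: "real \<Rightarrow> real \<Rightarrow> nat \<Rightarrow> real \<Rightarrow> real" where
  "QQ a b N z = (\<Sum>k\<le>N. wq a b k * jacobi k a b z)"

lemma step7:
  assumes mono: "\<And>i. Suc i < m \<Longrightarrow> \<nu> (Suc i) \<le> \<nu> i"
  shows "detm m (\<lambda>i j. QQ a b (\<nu> i) (x j)) =
    (\<Sum>\<kappa>\<in>PiE {..<m} (\<lambda>i. if Suc i < m then {\<nu> (Suc i)<..\<nu> i} else {..\<nu> i}).
       (\<Prod>i<m. wq a b (\<kappa> i)) * detm m (\<lambda>i j. jacobi (\<kappa> i) a b (x j)))"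
proof -
  have "detm m (\<lambda>i j. QQ a b (\<nu> i) (x j)) =
    detm m (\<lambda>i j. if Suc i < m then QQ a b (\<nu> i) (x j) - 1 * QQ a b (\<nu> (Suc i)) (x j) else QQ a b (\<nu> i) (x j))"
    by (rule detm_rowop[symmetric])
  also have "\<dots> = detm m (\<lambda>i j. \<Sum>k\<in>(if Suc i < m then {\<nu> (Suc i)<..\<nu> i} else {..\<nu> i}).
        wq a b k * jacobi k a b (x j))"
  proof (rule detm_cong)
    fix i j assume i: "i < m" and j: "j < m"
    show "(if Suc i < m then QQ a b (\<nu> i) (x j) - 1 * QQ a b (\<nu> (Suc i)) (x j) else QQ a b (\<nu> i) (x j)) =
      (\<Sum>k\<in>(if Suc i < m then {\<nu> (Suc i)<..\<nu> i} else {..\<nu> i}). wq a b k * jacobi k a b (x j))"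
    proof (cases "Suc i < m")
      case True
      have le: "\<nu> (Suc i) \<le> \<nu> i" using mono True .
      have "QQ a b (\<nu> i) (x j) = QQ a b (\<nu> (Suc i)) (x j) + (\<Sum>k\<in>{\<nu> (Suc i)<..\<nu> i}. wq a b k * jacobi k a b (x j))"
        unfolding QQ_def ivl_disj_un_one(3)[OF le, symmetric]
        by (rule sum.union_disjoint) auto
      then show ?thesis using True by simp
    next
      case False
      then show ?thesis by (simp add: QQ_def)
    qed
  qed
  also have "\<dots> = (\<Sum>\<kappa>\<in>PiE {..<m} (\<lambda>i. if Suc i < m then {\<nu> (Suc i)<..\<nu> i} else {..\<nu> i}).
       (\<Prod>i<m. wq a b (\<kappa> i)) * detm m (\<lambda>i j. jacobi (\<kappa> i) a b (x j)))"
    by (rule detm_multilinear) simp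
  finally show ?thesis .
qed

lemma main_det:
  fixes a b :: real and lam :: "nat \<Rightarrow> nat" and x :: "nat \<Rightarrow> real"
    and l :: "nat \<Rightarrow> nat" and T :: "nat \<Rightarrow> nat set" and S :: "(nat \<Rightarrow> nat) \<Rightarrow> nat \<Rightarrow> nat set"
  assumes a: "a > -1" and b: "b > -1" and lam: "is_partition_len (Suc m) lam"
  assumes l_def: "l = (\<lambda>i. lam i + Suc m - 1 - i)"
  assumes T_def: "T = (\<lambda>i. {l (Suc i)..<l i})"
  assumes S_def: "S = (\<lambda>\<nu> i. if Suc i < m then {\<nu> (Suc i)<..\<nu> i} else {..\<nu> i})"
  shows "detm (Suc m) (\<lambda>i j. jacobi (l i) a b ((x(m := 1)) j)) =
    (\<Prod>i<Suc m. G (l i) a) * (\<Prod>j<m. x j - 1) *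
    (\<Sum>\<nu>\<in>PiE {..<m} T. (\<Prod>i<m. theta a b (\<nu> i)) *
       (\<Sum>\<kappa>\<in>PiE {..<m} (S \<nu>). (\<Prod>i<m. wq a b (\<kappa> i)) * detm m (\<lambda>i j. jacobi (\<kappa> i) a b (x j))))"
proof -
  define y where "y = x(m := 1)"
  define U where "U = (\<lambda>i j. jacobi (l i) a b (y j) / G (l i) a)"
  have Gpos: "\<And>k. G k a > 0" using G_pos[OF a] .
  have ldec: "l (Suc i) < l i" if "i < m" for i
  proof -
    have "lam (Suc i) \<le> lam i" using lam unfolding is_partition_len_def by auto
    then show ?thesis unfolding l_def using that by simp
  qed
  have "detm (Suc m) (\<lambda>i j. jacobi (l i) a b (y j)) = detm (Suc m) (\<lambda>i j. G (l i) a * U i j)"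
    unfolding U_def using Gpos by (simp add: less_imp_neq[symmetric])
  also have "\<dots> = (\<Prod>i<Suc m. G (l i) a) * detm (Suc m) U"
    by (rule detm_rowscale)
  also have "detm (Suc m) U = detm (Suc m) (\<lambda>i j. if Suc i < Suc m then U i j - 1 * U (Suc i) j else U i j)"
    by (rule detm_rowop[symmetric])
  also have "\<dots> = 1 * detm m (\<lambda>i j. if Suc i < Suc m then U i j - 1 * U (Suc i) j else U i j)"
  proof -
    have U1: "U i m = 1" for i unfolding U_def y_def using jacobi_at1[OF a] Gpos[of "l i"]
      by (simp add: less_imp_neq[symmetric])
    show ?thesis by (subst detm_lastcol) (auto simp: U1)
  qed
  also have "\<dots> = detm m (\<lambda>i j. (\<Sum>N\<in>T i. theta a b N * QQ a b N (x j)) * (x j - 1))"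
  proof (simp only: mult_1_left, rule detm_cong)
    fix i j assume i: "i < m" and j: "j < m"
    have yj: "y j = x j" using j unfolding y_def by simp
    have "U i j - U (Suc i) j = (\<Sum>N = l (Suc i)..<l i. jacobi (Suc N) a b (x j) / G (Suc N) a - jacobi N a b (x j) / G N a)"
      unfolding U_def yj by (rule sum_Suc_diff'[symmetric]) (use ldec[OF i] in simp)
    also have "\<dots> = (\<Sum>N\<in>T i. theta a b N * QQ a b N (x j)) * (x j - 1)"
      unfolding T_def Dstep[OF a b] QQ_def sum_distrib_right by (intro sum.cong refl) (simp add: mult_ac)
    finally show "(if Suc i < Suc m then U i j - U (Suc i) j else U i j) =
      (\<Sum>N\<in>T i. theta a b N * QQ a b N (x j)) * (x j - 1)" using i by simp
  qed
  also have "\<dots> = (\<Prod>j<m. x j - 1) * detm m (\<lambda>i j. \<Sum>N\<in>T i. theta a b N * QQ a b N (x j))"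
    by (rule detm_colscale)
  also have "detm m (\<lambda>i j. \<Sum>N\<in>T i. theta a b N * QQ a b N (x j)) =
     (\<Sum>\<nu>\<in>PiE {..<m} T. (\<Prod>i<m. theta a b (\<nu> i)) * detm m (\<lambda>i j. QQ a b (\<nu> i) (x j)))"
    by (rule detm_multilinear) (simp add: T_def)
  also have "\<dots> = (\<Sum>\<nu>\<in>PiE {..<m} T. (\<Prod>i<m. theta a b (\<nu> i)) *
       (\<Sum>\<kappa>\<in>PiE {..<m} (S \<nu>). (\<Prod>i<m. wq a b (\<kappa> i)) * detm m (\<lambda>i j. jacobi (\<kappa> i) a b (x j))))"
  proof (rule sum.cong[OF refl])
    fix \<nu> assume \<nu>: "\<nu> \<in> PiE {..<m} T"
    have mono: "\<nu> (Suc i) \<le> \<nu> i" if "Suc i < m" for i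
    proof -
      have "\<nu> (Suc i) < l (Suc i)" using PiE_mem[OF \<nu>, of "Suc i"] that by (simp add: T_def)
      moreover have "l (Suc i) \<le> \<nu> i" using PiE_mem[OF \<nu>, of i] that by (simp add: T_def)
      ultimately show ?thesis by simp
    qed
    have "detm m (\<lambda>i j. QQ a b (\<nu> i) (x j)) = (\<Sum>\<kappa>\<in>PiE {..<m} (S \<nu>). (\<Prod>i<m. wq a b (\<kappa> i)) * detm m (\<lambda>i j. jacobi (\<kappa> i) a b (x j)))"
      unfolding S_def by (rule step7) (rule mono)
    then show "(\<Prod>i<m. theta a b (\<nu> i)) * detm m (\<lambda>i j. QQ a b (\<nu> i) (x j)) = (\<Prod>i<m. theta a b (\<nu> i)) * (\<Sum>\<kappa>\<in>PiE {..<m} (S \<nu>). (\<Prod>i<m. wq a b (\<kappa> i)) * detm m (\<lambda>i j. jacobi (\<kappa> i) a b (x j)))"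
      by simp
  qed
  finally show ?thesis unfolding y_def by (simp add: mult_ac)
qed

theorem proposition7p5:
  fixes a b :: real and n :: nat and lam :: "nat \<Rightarrow> nat"
  assumes "a > -1" and "b > -1" and "n \<ge> 2"
    and "is_partition_len n lam"
  shows "\<exists>c :: (nat \<Rightarrow> nat) \<Rightarrow> real.
           finite {\<nu>. c \<nu> \<noteq> 0} \<and>
           (\<forall>\<nu>. c \<nu> \<noteq> 0 \<longrightarrow> is_partition_len (n - 1) \<nu>) \<and>
           (\<forall>x :: nat \<Rightarrow> real.
              (\<forall>i<n-1. \<forall>j<n-1. i \<noteq> j \<longrightarrow> x i \<noteq> x j) \<and> (\<forall>i<n-1. x i \<noteq> 1) \<longrightarrow>
              mjacobi n lam a b (x(n - 1 := 1)) =
                (\<Sum>\<nu>\<in>{\<nu>. c \<nu> \<noteq> 0}. c \<nu> * mjacobi (n - 1) \<nu> a b x)) \<and>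
           (\<forall>\<nu>. c \<nu> \<ge> 0)"
proof -
  note a = assms(1) and b = assms(2)
  obtain m where n: "n = Suc m" using assms(3) by (cases n) auto
  have nm: "n - 1 = m" using n by simp
  have lam: "is_partition_len (Suc m) lam" using assms(4) n by simp
  define l where "l = (\<lambda>i. lam i + Suc m - 1 - i)"
  define T where "T = (\<lambda>i. {l (Suc i)..<l i})"
  define S where "S = (\<lambda>(\<nu> :: nat \<Rightarrow> nat) i. if Suc i < m then {\<nu> (Suc i)<..\<nu> i} else {..\<nu> i})"
  define Z where "Z = Sigma (PiE {..<m} T) (\<lambda>\<nu>. PiE {..<m} (S \<nu>))"
  define C where "C = (\<lambda>z :: (nat \<Rightarrow> nat) \<times> (nat \<Rightarrow> nat).
     (\<Prod>i<Suc m. G (l i) a) * ((\<Prod>i<m. theta a b (fst z i)) * (\<Prod>i<m. wq a b (snd z i))))"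
  define h where "h = (\<lambda>z :: (nat \<Rightarrow> nat) \<times> (nat \<Rightarrow> nat). \<lambda>i. if i < m then snd z i - (m - 1 - i) else 0)"
  define c where "c = (\<lambda>\<mu>. \<Sum>z\<in>{z \<in> Z. h z = \<mu>}. C z)"
  have fT: "finite (T i)" for i by (simp add: T_def)
  have fS: "finite (S \<nu> i)" for \<nu> i by (simp add: S_def)
  have finZ: "finite Z" unfolding Z_def
    by (intro finite_SigmaI finite_PiE finite_lessThan fT fS)
  have Cpos: "C z > 0" for z
  proof -
    have "0 < (\<Prod>i<Suc m. G (l i) a)" by (rule prod_pos) (simp add: G_pos[OF a])
    moreover have "0 < (\<Prod>i<m. theta a b (fst z i))" by (rule prod_pos) (simp add: theta_pos[OF a b])
    moreover have "0 < (\<Prod>i<m. wq a b (snd z i))" by (rule prod_pos) (simp add: wq_pos[OF a b])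
    ultimately show ?thesis unfolding C_def by simp
  qed
  have dec: "snd z (Suc i) < snd z i" if z: "z \<in> Z" and i: "Suc i < m" for z i
  proof -
    obtain \<nu> \<kappa> where zz: "z = (\<nu>, \<kappa>)" and \<kappa>: "\<kappa> \<in> PiE {..<m} (S \<nu>)"
      using z unfolding Z_def by auto
    have "\<kappa> i \<in> S \<nu> i" "\<kappa> (Suc i) \<in> S \<nu> (Suc i)" using PiE_mem[OF \<kappa>] i by auto
    then have "\<nu> (Suc i) < \<kappa> i" "\<kappa> (Suc i) \<le> \<nu> (Suc i)" using i unfolding S_def
      by (auto split: if_splits)
    then show ?thesis using zz by simp
  qed
  have big: "m - 1 - i \<le> snd z i" if z: "z \<in> Z" and i: "i < m" for z i
  proof -
    have "snd z (m - 1) + (m - 1 - i) \<le> snd z i"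
      by (rule decr_gap[of m "snd z" i "m - 1"]) (use dec[OF z] i in auto)
    then show ?thesis by linarith
  qed
  have hz: "h z i + m - 1 - i = snd z i" if z: "z \<in> Z" and i: "i < m" for z i
    using big[OF z i] i unfolding h_def by simp
  have part: "is_partition_len m (h z)" if z: "z \<in> Z" for z
    unfolding is_partition_len_def
  proof (intro conjI allI impI)
    fix i j :: nat assume ij: "i \<le> j"
    show "h z j \<le> h z i"
    proof (cases "j < m")
      case True
      have "snd z j + (j - i) \<le> snd z i" using decr_gap[of m "snd z" i j] dec[OF z] ij True by simp
      then show ?thesis using True ij big[OF z True] big[OF z, of i] unfolding h_def by simp
    next
      case False then show ?thesis unfolding h_def by simp
    qed
  next
    fix i :: nat assume "m \<le> i" then show "h z i = 0" unfolding h_def by simp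
  qed
  have c_nn: "c \<mu> \<ge> 0" for \<mu> unfolding c_def using Cpos by (intro sum_nonneg) (simp add: less_imp_le)
  have c_sub: "{\<mu>. c \<mu> \<noteq> 0} \<subseteq> h ` Z"
  proof
    fix \<mu> assume mu: "\<mu> \<in> {\<mu>. c \<mu> \<noteq> 0}"
    have "{z \<in> Z. h z = \<mu>} \<noteq> {}"
    proof
      assume "{z \<in> Z. h z = \<mu>} = {}"
      then have "c \<mu> = 0" unfolding c_def by (simp only: sum.empty)
      then show False using mu by simp
    qed
    then show "\<mu> \<in> h ` Z" by blast
  qed
  have ident: "mjacobi n lam a b (x(n - 1 := 1)) = (\<Sum>\<mu>\<in>{\<mu>. c \<mu> \<noteq> 0}. c \<mu> * mjacobi (n - 1) \<mu> a b x)"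
    if x1: "\<forall>i<n-1. x i \<noteq> 1" for x
  proof -
    define P where "P = (\<Prod>j<m. x j - 1)"
    have P: "P \<noteq> 0" unfolding P_def using x1 nm by auto
    define V where "V = vandermonde m x"
    have "mjacobi n lam a b (x(n - 1 := 1)) =
       detm (Suc m) (\<lambda>i j. jacobi (l i) a b ((x(m := 1)) j)) / vandermonde (Suc m) (x(m := 1))"
      unfolding nm unfolding n mjacobi_def l_def by (rule refl)
    also have "\<dots> = (\<Prod>i<Suc m. G (l i) a) * P *
      (\<Sum>\<nu>\<in>PiE {..<m} T. (\<Prod>i<m. theta a b (\<nu> i)) *
       (\<Sum>\<kappa>\<in>PiE {..<m} (S \<nu>). (\<Prod>i<m. wq a b (\<kappa> i)) * detm m (\<lambda>i j. jacobi (\<kappa> i) a b (x j)))) / (V * P)"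
      unfolding vander_split P_def V_def by (rule arg_cong2[where f="(/)"], rule main_det[OF a b lam l_def T_def S_def], rule refl)
    also have "\<dots> = (\<Sum>\<nu>\<in>PiE {..<m} T. \<Sum>\<kappa>\<in>PiE {..<m} (S \<nu>).
        C (\<nu>, \<kappa>) * (detm m (\<lambda>i j. jacobi (\<kappa> i) a b (x j)) / V))"
    proof -
      have e: "\<And>A B. A * P * B / (V * P) = A * B / V" using P by simp
      show ?thesis unfolding e sum_distrib_left sum_divide_distrib C_def fst_conv snd_conv
        by (intro sum.cong refl) (simp add: mult_ac)
    qed
    also have "\<dots> = (\<Sum>z\<in>Z. C z * (detm m (\<lambda>i j. jacobi (snd z i) a b (x j)) / V))"
      unfolding Z_def by (subst sum.Sigma) (auto intro: finite_PiE fT fS simp: case_prod_unfold)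
    also have "\<dots> = (\<Sum>z\<in>Z. C z * mjacobi m (h z) a b x)"
    proof (intro sum.cong refl arg_cong2[where f="(*)"])
      fix z assume z: "z \<in> Z"
      have "detm m (\<lambda>i j. jacobi (snd z i) a b (x j)) = detm m (\<lambda>i j. jacobi (h z i + m - 1 - i) a b (x j))"
        by (rule detm_cong) (simp add: hz[OF z, simplified])
      then show "detm m (\<lambda>i j. jacobi (snd z i) a b (x j)) / V = mjacobi m (h z) a b x"
        unfolding mjacobi_def V_def by simp
    qed
    also have "\<dots> = (\<Sum>\<mu>\<in>h ` Z. c \<mu> * mjacobi m \<mu> a b x)"
      unfolding c_def sum_distrib_right
      by (subst sum.image_gen[OF finZ, of _ h]) (intro sum.cong refl, auto)
    also have "\<dots> = (\<Sum>\<mu>\<in>{\<mu>. c \<mu> \<noteq> 0}. c \<mu> * mjacobi m \<mu> a b x)"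
      by (rule sum.mono_neutral_right) (use finZ c_sub in auto)
    finally show ?thesis unfolding nm .
  qed
  show ?thesis
  proof (intro exI[of _ c] conjI allI impI)
    show "finite {\<mu>. c \<mu> \<noteq> 0}" using c_sub finZ by (rule finite_subset[OF _ finite_imageI])
  next
    fix \<mu> assume "c \<mu> \<noteq> 0"
    then obtain z where "z \<in> Z" "\<mu> = h z" using c_sub by blast
    then show "is_partition_len (n - 1) \<mu>" using part nm by simp
  next
    fix x :: "nat \<Rightarrow> real"
    assume "(\<forall>i<n-1. \<forall>j<n-1. i \<noteq> j \<longrightarrow> x i \<noteq> x j) \<and> (\<forall>i<n-1. x i \<noteq> 1)"
    then show "mjacobi n lam a b (x(n - 1 := 1)) = (\<Sum>\<mu>\<in>{\<mu>. c \<mu> \<noteq> 0}. c \<mu> * mjacobi (n - 1) \<mu> a b x)"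
      using ident by blast
  next
    fix \<mu> show "0 \<le> c \<mu>" by (rule c_nn)
  qed
qed

end
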